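(* Let $n_0>0$, $\alpha>0$, $P>0$. For each $T>0$ and integer $k\ge1$ let $\omega_k(T)>0$ be the unique positive solution of $2\arctan(\omega_k/\alpha)=k\pi-\omega_k T$, set $\lambda_k(T)=\frac{2\alpha P}{\alpha^2+\omega_k(T)^2}$ (the Mercer eigenvalues on $[0,T]$ of the kernel $Pe^{-\alpha|t_1-t_2|}$), and define $$I(T)=\frac12\sum_{k=1}^{\infty}\log\left(1+\frac{\lambda_k(T)}{n_0/2}\right).$$ Then the instantaneous finite-time rate at the origin satisfies $$C(0^+)=\frac{\partial I(T)}{\partial T}\Big|_{T=0^+}=\frac{P}{n_0}.$$
   Context: Setting: the transmitted signal is a zero-mean stationary Gaussian process with autocorrelation $Pe^{-\alpha|\tau|}$ observed on $[0,T]$ in additive white Gaussian noise of power spectral density $n_0/2$; $I(T)$ is the finite-time mutual information and $C(T)=I(T)/T$ the finite-time rate, with $C(0^+)$ its limit as $T\to0^+$, equal to the right derivative of $I$ at $T=0$ (where $I(0)=0$). Logarithms are natural. *)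

theory Defs
  imports "HOL-Analysis.Analysis"
begin

definition omega :: "real \<Rightarrow> nat \<Rightarrow> real \<Rightarrow> real" where
  "omega \<alpha> k T = (THE w. w > 0 \<and> 2 * arctan (w / \<alpha>) = real k * pi - w * T)"

definition eig :: "real \<Rightarrow> real \<Rightarrow> nat \<Rightarrow> real \<Rightarrow> real" where
  "eig P \<alpha> k T = 2 * \<alpha> * P / (\<alpha>^2 + (omega \<alpha> k T)^2)"

definition MI :: "real \<Rightarrow> real \<Rightarrow> real \<Rightarrow> real \<Rightarrow> real" where
  "MI n0 P \<alpha> T = 1/2 * (\<Sum>k. ln (1 + eig P \<alpha> (Suc k) T / (n0 / 2)))"

end

theory Submission
  imports Defs
begin

lemma arctan_lower: fixes u :: real assumes "0 \<le> u" shows "u / (1 + u^2) \<le> arctan u"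
proof -
  let ?h = "\<lambda>x::real. arctan x - x / (1 + x^2)"
  have "?h 0 \<le> ?h u"
  proof (rule DERIV_nonneg_imp_increasing_open[OF assms])
    fix x :: real assume "0 < x" "x < u"
    have p: "1 + x * x > 0" by (simp add: add_pos_nonneg)
    have d: "(?h has_real_derivative (inverse (1 + x^2) - ((1 * (1 + x^2) - x * (2 * x)) / (1 + x^2)^2))) (at x)"
      using p by (auto intro!: derivative_eq_intros DERIV_arctan simp: power2_eq_square)
    have "inverse (1 + x^2) - ((1 * (1 + x^2) - x * (2 * x)) / (1 + x^2)^2) = 2 * x^2 / (1 + x^2)^2"
    proof -
      define q where "q = 1 + x^2"
      have q: "q \<noteq> 0" using p by (simp add: q_def power2_eq_square)
      have "inverse q - (1 * q - x * (2 * x)) / q^2 = (q - (q - 2 * x^2)) / q^2"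
        using q by (simp add: field_simps power2_eq_square)
      also have "\<dots> = 2 * x^2 / q^2" by simp
      finally show ?thesis by (simp add: q_def)
    qed
    then show "\<exists>y. (?h has_real_derivative y) (at x) \<and> 0 \<le> y" using d by auto
  next
    show "continuous_on {0..u} ?h"
      by (intro continuous_intros) (auto, smt (verit) zero_le_power2)
  qed
  then show ?thesis by simp
qed


lemma omega_props:
  assumes a: "\<alpha> > 0" and T: "T > 0" and k: "k \<ge> 1"
  shows "omega \<alpha> k T > 0 \<and> 2 * arctan (omega \<alpha> k T / \<alpha>) = real k * pi - omega \<alpha> k T * T"
proof -
  let ?f = "\<lambda>w. 2 * arctan (w / \<alpha>) + w * T"
  have kp: "real k * pi > 0" using k by simp
  have "\<exists>x\<ge>0. x \<le> real k * pi / T \<and> ?f x = real k * pi"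
  proof (rule IVT)
    show "?f 0 \<le> real k * pi" using kp by simp
    have "0 \<le> arctan (real k * pi / T / \<alpha>)" using kp a T by simp
    then show "real k * pi \<le> ?f (real k * pi / T)" using T by simp
    show "0 \<le> real k * pi / T" using kp T by simp
    show "\<forall>x. 0 \<le> x \<and> x \<le> real k * pi / T \<longrightarrow> isCont ?f x"
    proof (intro allI impI)
      fix x :: real
      have "isCont (\<lambda>w. w / \<alpha>) x" using a by (intro continuous_intros) simp
      then have "isCont (\<lambda>w. arctan (w / \<alpha>)) x" by (rule isCont_o2[OF _ isCont_arctan])
      then show "isCont ?f x" using a by (intro continuous_intros) simp_all
    qed
  qed
  then obtain x where x: "x \<ge> 0" "?f x = real k * pi" by blast
  have "x \<noteq> 0" using x kp by auto
  with x have ex: "x > 0 \<and> 2 * arctan (x / \<alpha>) = real k * pi - x * T" by auto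
  have mono: "?f w1 < ?f w2" if "w1 < w2" for w1 w2
  proof -
    have "arctan (w1/\<alpha>) < arctan (w2/\<alpha>)" using that a by (simp add: arctan_less_iff divide_strict_right_mono)
    moreover have "w1 * T < w2 * T" using that T by simp
    ultimately show ?thesis by simp
  qed
  have uniq: "w = x" if "w > 0 \<and> 2 * arctan (w / \<alpha>) = real k * pi - w * T" for w
  proof (rule ccontr)
    assume "w \<noteq> x"
    then have "w < x \<or> x < w" by linarith
    then show False using mono[of w x] mono[of x w] that ex by auto
  qed
  have "omega \<alpha> k T = x" unfolding omega_def
  proof (rule the_equality)
    show "x > 0 \<and> 2 * arctan (x / \<alpha>) = real k * pi - x * T" by (rule ex)
  next
    fix w assume "w > 0 \<and> 2 * arctan (w / \<alpha>) = real k * pi - w * T"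
    then show "w = x" by (rule uniq)
  qed
  then show ?thesis using ex by simp
qed


lemma eig1_bounds:
  assumes a: "\<alpha> > 0" and T: "T > 0" and P: "P > 0"
  shows "2 * P * T / (\<alpha> * T + 2) \<le> eig P \<alpha> 1 T" and "eig P \<alpha> 1 T \<le> P * T"
proof -
  define w where "w = omega \<alpha> 1 T"
  have w: "w > 0" and eq: "2 * arctan (w / \<alpha>) = pi - w * T"
    using omega_props[OF a T, of 1] by (auto simp: w_def)
  have "arctan (1 / (w / \<alpha>)) = pi / 2 - arctan (w / \<alpha>)"
    using arctan_inverse[of "w / \<alpha>"] w a by simp
  then have at: "arctan (\<alpha> / w) = w * T / 2" using eq by simp
  have eigw: "eig P \<alpha> 1 T = 2 * \<alpha> * P / (\<alpha>^2 + w^2)" by (simp add: eig_def w_def)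
  have pos: "\<alpha>^2 + w^2 > 0" using a by (simp add: add_pos_nonneg)
  have "(\<alpha> / w) / (1 + (\<alpha> / w)^2) \<le> w * T / 2"
    using arctan_lower[of "\<alpha> / w"] a w at by simp
  moreover have "(\<alpha> / w) / (1 + (\<alpha> / w)^2) = \<alpha> * w / (\<alpha>^2 + w^2)"
    using w a by (simp add: field_simps power2_eq_square)
  ultimately have u: "\<alpha> * w / (\<alpha>^2 + w^2) \<le> w * T / 2" by metis
  have "eig P \<alpha> 1 T = (2 * P / w) * (\<alpha> * w / (\<alpha>^2 + w^2))"
    unfolding eigw using w pos by (simp add: field_simps)
  also have "\<dots> \<le> (2 * P / w) * (w * T / 2)"
    by (rule mult_left_mono[OF u]) (use P w in simp)
  also have "\<dots> = P * T" using w by simp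
  finally show "eig P \<alpha> 1 T \<le> P * T" .
  have "w * T / 2 \<le> \<alpha> / w" using arctan_le_self[of "\<alpha> / w"] a w at by simp
  then have "w^2 * T \<le> 2 * \<alpha>" using w by (simp add: field_simps power2_eq_square)
  then have w2: "w^2 \<le> 2 * \<alpha> / T" using T by (simp add: field_simps)
  have "2 * \<alpha> * P / (\<alpha>^2 + 2 * \<alpha> / T) \<le> 2 * \<alpha> * P / (\<alpha>^2 + w^2)"
    by (rule divide_left_mono) (use w2 pos a P T in \<open>auto intro!: mult_pos_pos add_pos_pos\<close>)
  moreover have "2 * \<alpha> * P / (\<alpha>^2 + 2 * \<alpha> / T) = 2 * P * T / (\<alpha> * T + 2)"
  proof -
    have d1: "\<alpha> * T + 2 > 0" using a T by (simp add: add_pos_pos)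
    have d2: "\<alpha>^2 + 2 * \<alpha> / T > 0" using a T by (simp add: add_pos_pos)
    have "2 * \<alpha> * P / (\<alpha>^2 + 2 * \<alpha> / T) = 2 * \<alpha> * P * T / ((\<alpha>^2 + 2 * \<alpha> / T) * T)"
      using T by simp
    also have "(\<alpha>^2 + 2 * \<alpha> / T) * T = \<alpha> * (\<alpha> * T + 2)" using T by (simp add: field_simps power2_eq_square)
    finally show ?thesis using a d1 by simp
  qed
  ultimately show "2 * P * T / (\<alpha> * T + 2) \<le> eig P \<alpha> 1 T" unfolding eigw by simp
qed

lemma eigk_bound:
  assumes a: "\<alpha> > 0" and T: "T > 0" and P: "P > 0" and k: "k \<ge> 1"
  shows "eig P \<alpha> (Suc k) T \<le> 2 * \<alpha> * P * T^2 / pi^2 * inverse (real k ^ 2)"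
proof -
  define w where "w = omega \<alpha> (Suc k) T"
  have w: "w > 0" and eq: "2 * arctan (w / \<alpha>) = real (Suc k) * pi - w * T"
    using omega_props[OF a T, of "Suc k"] by (auto simp: w_def)
  have "arctan (w / \<alpha>) < pi / 2" by (rule arctan_ubound)
  then have "w * T \<ge> real k * pi" using eq by (simp add: algebra_simps)
  then have wk: "w \<ge> real k * pi / T" using T by (simp add: field_simps)
  have kp: "real k * pi / T > 0" using k T by simp
  have "(real k * pi / T)^2 \<le> w^2" using wk kp by (intro power_mono) auto
  then have "(real k * pi / T)^2 \<le> \<alpha>^2 + w^2" by (smt (verit) zero_le_power2)
  then have "2 * \<alpha> * P / (\<alpha>^2 + w^2) \<le> 2 * \<alpha> * P / (real k * pi / T)^2"
    by (rule divide_left_mono) (use a P kp w k in \<open>auto intro!: mult_pos_pos add_pos_pos\<close>)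
  also have "\<dots> = 2 * \<alpha> * P * T^2 / pi^2 * inverse (real k ^ 2)"
    using T k by (simp add: field_simps power2_eq_square)
  finally show ?thesis by (simp add: eig_def w_def)
qed


lemma ln_lower: fixes y :: real assumes "y \<ge> 0" shows "y / (1 + y) \<le> ln (1 + y)"
proof -
  have p: "1 + y > 0" using assms by simp
  have "ln (inverse (1 + y)) \<le> inverse (1 + y) - 1" by (rule ln_le_minus_one) (use p in simp)
  moreover have "ln (inverse (1 + y)) = - ln (1 + y)" using p by (simp add: ln_inverse)
  moreover have "inverse (1 + y) - 1 = - (y / (1 + y))" using p by (simp add: field_simps)
  ultimately show ?thesis by simp
qed

lemma eig_nonneg:
  assumes "\<alpha> > 0" "P > 0" shows "eig P \<alpha> k T \<ge> 0"
proof -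
  have "\<alpha>^2 + (omega \<alpha> k T)^2 > 0" using assms by (simp add: add_pos_nonneg)
  then show ?thesis using assms unfolding eig_def by simp
qed

lemma MI_bounds:
  assumes n: "n0 > 0" and a: "\<alpha> > 0" and P: "P > 0" and T: "T > 0"
  shows "2*P*T/(n0*(2+\<alpha>*T)+4*P*T) \<le> MI n0 P \<alpha> T"
    and "MI n0 P \<alpha> T \<le> P*T/n0 + 2*\<alpha>*P*(\<Sum>k. inverse (real (Suc k) ^ 2))/(n0*pi^2)*T^2"
proof -
  define S where "S = (\<Sum>k. inverse (real (Suc k) ^ 2))"
  define f where "f = (\<lambda>k. ln (1 + eig P \<alpha> (Suc k) T / (n0 / 2)))"
  define K where "K = (2/n0) * (2*\<alpha>*P*T^2/pi^2)"
  have MI: "MI n0 P \<alpha> T = 1/2 * suminf f" by (simp add: MI_def f_def)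
  have fnn: "0 \<le> f k" for k
    using eig_nonneg[OF a P, of "Suc k" T] n unfolding f_def by simp
  have fle: "f k \<le> eig P \<alpha> (Suc k) T / (n0 / 2)" for k
    unfolding f_def by (rule ln_add_one_self_le_self) (use eig_nonneg[OF a P, of "Suc k" T] n in simp)
  have hs: "summable (\<lambda>k. inverse (real (Suc k) ^ 2))"
    using inverse_power_summable[of 2, where ?'a = real] by (subst summable_Suc_iff) simp
  have fb: "f (Suc k) \<le> K * inverse (real (Suc k) ^ 2)" for k
  proof -
    have "f (Suc k) \<le> eig P \<alpha> (Suc (Suc k)) T / (n0 / 2)" by (rule fle)
    also have "\<dots> \<le> (2*\<alpha>*P*T^2/pi^2 * inverse (real (Suc k) ^ 2)) / (n0/2)"
      by (rule divide_right_mono[OF eigk_bound[OF a T P]]) (use n in auto)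
    also have "\<dots> = K * inverse (real (Suc k) ^ 2)" by (simp add: K_def field_simps)
    finally show ?thesis .
  qed
  have ks: "summable (\<lambda>k. K * inverse (real (Suc k) ^ 2))" using hs by (rule summable_mult)
  have fs1: "summable (\<lambda>k. f (Suc k))"
    by (rule summable_comparison_test'[OF ks]) (use fb fnn in auto)
  have fs: "summable f" using fs1 by (subst summable_Suc_iff[symmetric]) simp
  have split: "suminf f = f 0 + (\<Sum>k. f (Suc k))" using suminf_split_head[OF fs] by simp
  have tail: "(\<Sum>k. f (Suc k)) \<le> K * S"
  proof -
    have "(\<Sum>k. f (Suc k)) \<le> (\<Sum>k. K * inverse (real (Suc k) ^ 2))"
      by (rule suminf_le[OF _ fs1 ks]) (use fb in auto)
    also have "\<dots> = K * S" unfolding S_def by (rule suminf_mult[OF hs])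
    finally show ?thesis .
  qed
  have tail0: "0 \<le> (\<Sum>k. f (Suc k))" by (rule suminf_nonneg[OF fs1]) (use fnn in auto)
  have f0u: "f 0 \<le> P * T / (n0 / 2)"
    using fle[of 0] eig1_bounds(2)[OF a T P] n by (smt (verit) One_nat_def divide_right_mono half_gt_zero)
  show "MI n0 P \<alpha> T \<le> P*T/n0 + 2*\<alpha>*P*(\<Sum>k. inverse (real (Suc k) ^ 2))/(n0*pi^2)*T^2"
  proof -
    have "MI n0 P \<alpha> T \<le> 1/2 * (P * T / (n0 / 2) + K * S)" using MI split tail f0u by simp
    also have "\<dots> = P*T/n0 + 2*\<alpha>*P*S/(n0*pi^2)*T^2" using n by (simp add: K_def field_simps)
    finally show ?thesis by (simp add: S_def)
  qed
  define y where "y = (2 * P * T / (\<alpha> * T + 2)) / (n0 / 2)"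
  have d1: "\<alpha> * T + 2 > 0" using a T by (simp add: add_pos_pos)
  have y0: "y \<ge> 0" using d1 P T n by (simp add: y_def)
  have "y \<le> eig P \<alpha> (Suc 0) T / (n0 / 2)"
    unfolding y_def by (rule divide_right_mono) (use eig1_bounds(1)[OF a T P] n in auto)
  then have "ln (1 + y) \<le> f 0" unfolding f_def using y0 by simp
  then have "y / (1 + y) \<le> f 0" using ln_lower[OF y0] by simp
  moreover have "1/2 * (y / (1 + y)) = 2*P*T/(n0*(2+\<alpha>*T)+4*P*T)"
  proof -
    have d2: "n0*(2+\<alpha>*T)+4*P*T > 0" using n d1 P T by (simp add: add_pos_pos add.commute)
    have d3: "n0 * (\<alpha> * T + 2) > 0" using n d1 by simp
    have y: "y = 4 * P * T / (n0 * (\<alpha> * T + 2))" unfolding y_def using d1 n by (simp add: field_simps)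
    have y1: "1 + y = (n0*(2+\<alpha>*T)+4*P*T) / (n0 * (\<alpha> * T + 2))" unfolding y using d3 by (simp add: field_simps)
    define D where "D = n0 * (\<alpha> * T + 2)"
    define E where "E = n0*(2+\<alpha>*T)+4*P*T"
    have "y / (1 + y) = (4 * P * T / D) / (E / D)" unfolding y1 by (simp add: y D_def E_def)
    also have "\<dots> = 4 * P * T / E" using d3 unfolding D_def[symmetric] by simp
    finally show ?thesis by (simp add: E_def)
  qed
  ultimately show "2*P*T/(n0*(2+\<alpha>*T)+4*P*T) \<le> MI n0 P \<alpha> T" using MI split tail0 by linarith
qed


theorem theorem3:
  fixes n0 \<alpha> P :: real
  assumes "n0 > 0" and "\<alpha> > 0" and "P > 0"
  shows "((\<lambda>T. MI n0 P \<alpha> T / T) \<longlongrightarrow> P / n0) (at_right 0)"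
proof (rule tendsto_sandwich)
  define S where "S = (\<Sum>k. inverse (real (Suc k) ^ 2))"
  define D where "D = 2*\<alpha>*P*S/(n0*pi^2)"
  show "\<forall>\<^sub>F T in at_right 0. 2*P/(n0*(2+\<alpha>*T)+4*P*T) \<le> MI n0 P \<alpha> T / T"
  proof (rule eventually_mono[OF eventually_at_right_less])
    fix T :: real assume T: "0 < T"
    have h1: "2*P*T/(n0*(2+\<alpha>*T)+4*P*T) \<le> MI n0 P \<alpha> T" by (rule MI_bounds(1)[OF assms T])
    have h2: "2*P*T/(n0*(2+\<alpha>*T)+4*P*T) = 2*P/(n0*(2+\<alpha>*T)+4*P*T) * T" by simp
    have "2*P/(n0*(2+\<alpha>*T)+4*P*T) * T \<le> MI n0 P \<alpha> T" using h1 unfolding h2 .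
    then show "2*P/(n0*(2+\<alpha>*T)+4*P*T) \<le> MI n0 P \<alpha> T / T" using T by (simp only: pos_le_divide_eq)
  qed
  show "\<forall>\<^sub>F T in at_right 0. MI n0 P \<alpha> T / T \<le> P/n0 + D*T"
  proof (rule eventually_mono[OF eventually_at_right_less])
    fix T :: real assume T: "0 < T"
    have h1: "MI n0 P \<alpha> T \<le> P*T/n0 + D*T^2" using MI_bounds(2)[OF assms T] unfolding D_def S_def by simp
    have h2: "P*T/n0 + D*T^2 = (P/n0 + D*T) * T" by (simp add: algebra_simps power2_eq_square)
    have "MI n0 P \<alpha> T \<le> (P/n0 + D*T) * T" using h1 unfolding h2 .
    then show "MI n0 P \<alpha> T / T \<le> P/n0 + D*T" using T by (simp only: pos_divide_le_eq)
  qed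
  have "((\<lambda>T. 2*P/(n0*(2+\<alpha>*T)+4*P*T)) \<longlongrightarrow> 2*P/(n0*(2+\<alpha>*0)+4*P*0)) (at_right 0)"
  proof (rule tendsto_divide)
    show "((\<lambda>T. n0*(2+\<alpha>*T)+4*P*T) \<longlongrightarrow> n0*(2+\<alpha>*0)+4*P*0) (at_right 0)"
      by (intro tendsto_add tendsto_mult tendsto_const tendsto_ident_at)
    show "n0*(2+\<alpha>*0)+4*P*0 \<noteq> 0" using assms by simp
  qed (rule tendsto_const)
  then show "((\<lambda>T. 2*P/(n0*(2+\<alpha>*T)+4*P*T)) \<longlongrightarrow> P / n0) (at_right 0)" by simp
  have "((\<lambda>T. P/n0 + D*T) \<longlongrightarrow> P/n0 + D*0) (at_right 0)"
    by (intro tendsto_add tendsto_mult tendsto_const tendsto_ident_at)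
  then show "((\<lambda>T. P/n0 + D*T) \<longlongrightarrow> P / n0) (at_right 0)" by simp
qed

end
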